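(* Let $d\ge1$, $0<\lambda\le\Lambda$, $\gamma>0$, and fix $\alpha\in(0,\alpha_0)\cap\left(0,\frac1{1+\gamma}\right]$. Let $0<\rho_0<1/2$ and $\epsilon_0>0$ be the constants (depending only on $d,\lambda,\Lambda,\gamma,\alpha$) with the property: for every $\vec q\in\mathbb{R}^d$, every $(\lambda,\Lambda)$-elliptic $F$ with $F(X,0)=0$, every $f\in L^\infty(B_1)$ with $\sup_{M\neq0}\|M\|^{-1}\|F(\cdot,M)-F(0,M)\|_{L^\infty(B_1)}+\|f\|_{L^\infty(B_1)}\le\epsilon_0$, and every viscosity solution $u\in C(B_1)$, $|u|\le1$, of $|\vec q+\nabla u|^\gamma F(X,D^2u)=f$ in $B_1$, there is an affine $\ell(X)=a+\vec b\cdot X$ with $|a|+|\vec b|\le C(d,\lambda,\Lambda)$ and $\sup_{B_{\rho_0}}|u-\ell|\le\rho_0^{1+\alpha}$. Now let $\vec q$, $F$, $f$, $u$ satisfy these same hypotheses. Then there exists a sequence of affine functions $\ell_k(X)=a_k+\vec b_k\cdot X$, $k\ge1$, such that $$|a_{k+1}-a_k|+\rho_0^k|\vec b_{k+1}-\vec b_k|\le C_0\,\rho_0^{(1+\alpha)k}$$ and $$\sup_{B_{\rho_0^k}}|u(X)-\ell_k(X)|\le\rho_0^{k(1+\alpha)},$$ where $C_0$ is a constant depending only on $d,\lambda,\Lambda$.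
   Context: $(\lambda,\Lambda)$-elliptic means $\lambda\|P\|\le F(X,M+P)-F(X,M)\le\Lambda\|P\|$ for all $X\in B_1$, $M\in\mathrm{Sym}(d)$, $P\ge0$. $\alpha_0=\alpha_0(d,\lambda,\Lambda)\in(0,1)$ is the optimal universal Hölder exponent of the gradient for viscosity solutions of constant coefficient homogeneous $(\lambda,\Lambda)$-elliptic equations $\mathfrak F(D^2h)=0$. *)

theory Defs
  imports "HOL-Analysis.Analysis"
begin

definition mnorm :: "real^'n^'n \<Rightarrow> real" where
  "mnorm M = onorm (\<lambda>x. M *v x)"

definition sym_mat :: "real^'n^'n \<Rightarrow> bool" where
  "sym_mat M \<longleftrightarrow> transpose M = M"

definition psd_mat :: "real^'n^'n \<Rightarrow> bool" where
  "psd_mat P \<longleftrightarrow> (\<forall>x. 0 \<le> x \<bullet> (P *v x))"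

definition unif_elliptic ::
  "real \<Rightarrow> real \<Rightarrow> (real^'n \<Rightarrow> real^'n^'n \<Rightarrow> real) \<Rightarrow> (real^'n) set \<Rightarrow> bool" where
  "unif_elliptic lam Lam F S \<longleftrightarrow>
     (\<forall>X\<in>S. \<forall>M P. sym_mat M \<and> sym_mat P \<and> psd_mat P \<longrightarrow>
        lam * mnorm P \<le> F X (M + P) - F X M \<and> F X (M + P) - F X M \<le> Lam * mnorm P)"

definition C2_on ::
  "(real^'n \<Rightarrow> real) \<Rightarrow> (real^'n \<Rightarrow> real^'n) \<Rightarrow> (real^'n \<Rightarrow> real^'n^'n) \<Rightarrow> (real^'n) set \<Rightarrow> bool" where
  "C2_on \<phi> g H S \<longleftrightarrow>
     (\<forall>y\<in>S. (\<phi> has_derivative (\<lambda>v. g y \<bullet> v)) (at y) \<and> (g has_derivative (\<lambda>v. H y *v v)) (at y))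
     \<and> continuous_on S H"

text \<open>C-viscosity sub/supersolutions of G(X, Du, D^2u) = 0 in the open set S.\<close>
definition visc_sub ::
  "(real^'n \<Rightarrow> real^'n \<Rightarrow> real^'n^'n \<Rightarrow> real) \<Rightarrow> (real^'n \<Rightarrow> real) \<Rightarrow> (real^'n) set \<Rightarrow> bool" where
  "visc_sub G u S \<longleftrightarrow>
     (\<forall>x0\<in>S. \<forall>\<phi> g H r. 0 < r \<and> ball x0 r \<subseteq> S \<and> C2_on \<phi> g H (ball x0 r)
        \<and> (\<forall>y\<in>ball x0 r. u y - \<phi> y \<le> u x0 - \<phi> x0) \<longrightarrow> 0 \<le> G x0 (g x0) (H x0))"

definition visc_super ::
  "(real^'n \<Rightarrow> real^'n \<Rightarrow> real^'n^'n \<Rightarrow> real) \<Rightarrow> (real^'n \<Rightarrow> real) \<Rightarrow> (real^'n) set \<Rightarrow> bool" where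
  "visc_super G u S \<longleftrightarrow>
     (\<forall>x0\<in>S. \<forall>\<phi> g H r. 0 < r \<and> ball x0 r \<subseteq> S \<and> C2_on \<phi> g H (ball x0 r)
        \<and> (\<forall>y\<in>ball x0 r. u y - \<phi> y \<ge> u x0 - \<phi> x0) \<longrightarrow> G x0 (g x0) (H x0) \<le> 0)"

definition visc_solution ::
  "(real^'n \<Rightarrow> real^'n \<Rightarrow> real^'n^'n \<Rightarrow> real) \<Rightarrow> (real^'n \<Rightarrow> real) \<Rightarrow> (real^'n) set \<Rightarrow> bool" where
  "visc_solution G u S \<longleftrightarrow> visc_sub G u S \<and> visc_super G u S"

text \<open>alpha_0(d,lambda,Lambda): optimal universal Hoelder exponent of the gradient for
  viscosity solutions of constant coefficient homogeneous elliptic equations.\<close>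
definition alpha0 :: "'n::finite itself \<Rightarrow> real \<Rightarrow> real \<Rightarrow> real" where
  "alpha0 _ lam Lam = Sup {\<beta>. 0 < \<beta> \<and> \<beta> < 1 \<and>
     (\<exists>K. \<forall>(\<FF>::real^'n^'n \<Rightarrow> real) (h::real^'n \<Rightarrow> real).
        unif_elliptic lam Lam (\<lambda>X M. \<FF> M) (ball 0 1) \<and> \<FF> 0 = 0 \<and>
        continuous_on (ball 0 1) h \<and> (\<forall>X\<in>ball 0 1. \<bar>h X\<bar> \<le> 1) \<and>
        visc_solution (\<lambda>X p M. \<FF> M) h (ball 0 1) \<longrightarrow>
        (\<exists>g. (\<forall>x\<in>ball 0 (1/2). (h has_derivative (\<lambda>v. g x \<bullet> v)) (at x)) \<and>
             (\<forall>x\<in>ball 0 (1/2). \<forall>y\<in>ball 0 (1/2). norm (g x - g y) \<le> K * norm (x - y) powr \<beta>)))}"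

definition hyp_class ::
  "real \<Rightarrow> real \<Rightarrow> real \<Rightarrow> real \<Rightarrow> real^'n \<Rightarrow> (real^'n \<Rightarrow> real^'n^'n \<Rightarrow> real)
   \<Rightarrow> (real^'n \<Rightarrow> real) \<Rightarrow> (real^'n \<Rightarrow> real) \<Rightarrow> bool" where
  "hyp_class lam Lam \<gamma> \<epsilon>0 q F f u \<longleftrightarrow>
     unif_elliptic lam Lam F (ball 0 1) \<and> (\<forall>X\<in>ball 0 1. F X 0 = 0) \<and>
     (\<exists>\<theta> \<eta>. (\<forall>M X. sym_mat M \<and> M \<noteq> 0 \<and> X \<in> ball 0 1 \<longrightarrow> \<bar>F X M - F 0 M\<bar> \<le> \<theta> * mnorm M)
            \<and> (\<forall>X\<in>ball 0 1. \<bar>f X\<bar> \<le> \<eta>) \<and> \<theta> + \<eta> \<le> \<epsilon>0) \<and>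
     continuous_on (ball 0 1) u \<and> (\<forall>X\<in>ball 0 1. \<bar>u X\<bar> \<le> 1) \<and>
     visc_solution (\<lambda>X p M. norm (q + p) powr \<gamma> * F X M - f X) u (ball 0 1)"

definition step_property ::
  "'n::finite itself \<Rightarrow> real \<Rightarrow> real \<Rightarrow> real \<Rightarrow> real \<Rightarrow> real \<Rightarrow> real \<Rightarrow> real \<Rightarrow> bool" where
  "step_property _ lam Lam \<gamma> \<alpha> \<rho>0 \<epsilon>0 C \<longleftrightarrow>
     (\<forall>(q::real^'n) F f u. hyp_class lam Lam \<gamma> \<epsilon>0 q F f u \<longrightarrow>
        (\<exists>a b. \<bar>a\<bar> + norm b \<le> C \<and>
               (\<forall>X\<in>ball 0 \<rho>0. \<bar>u X - (a + b \<bullet> X)\<bar> \<le> \<rho>0 powr (1 + \<alpha>))))"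

end

theory Submission
  imports Defs
begin


lemma mnorm_scale: "mnorm (k *\<^sub>R M) = \<bar>k\<bar> * mnorm (M::real^'n^'n)"
proof -
  have "(\<lambda>x. (k *\<^sub>R M) *v x) = (\<lambda>x. k *\<^sub>R (M *v x))"
    by (simp add: scaleR_matrix_vector_assoc)
  then show ?thesis unfolding mnorm_def by (simp add: onorm_scaleR)
qed

lemma dist_rescale: "0 < r \<Longrightarrow> dist X0 ((1/r) *\<^sub>R y) = dist (r *\<^sub>R X0) (y::'a::real_normed_vector) / r"
proof -
  assume r: "0 < r"
  have "X0 - (1/r) *\<^sub>R y = (1/r) *\<^sub>R (r *\<^sub>R X0 - y)" using r by (simp add: algebra_simps)
  then show ?thesis using r by (simp add: dist_norm)
qed

lemma sym_scale: "sym_mat M \<Longrightarrow> sym_mat (k *\<^sub>R (M::real^'n^'n))"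
  unfolding sym_mat_def by (simp add: transpose_scalar)

lemma psd_scale: "psd_mat P \<Longrightarrow> 0 \<le> k \<Longrightarrow> psd_mat (k *\<^sub>R (P::real^'n^'n))"
  unfolding psd_mat_def by (simp add: scaleR_matrix_vector_assoc[symmetric])

lemma C2_rescale:
  fixes \<phi>' :: "real^'n \<Rightarrow> real"
  assumes C2: "C2_on \<phi>' g' H' (ball X0 \<rho>)" and r: "0 < r" and s: "0 < s"
  shows "C2_on (\<lambda>Y. a + b \<bullet> Y + s * \<phi>' ((1/r) *\<^sub>R Y))
               (\<lambda>Y. b + (s/r) *\<^sub>R g' ((1/r) *\<^sub>R Y))
               (\<lambda>Y. (s/(r*r)) *\<^sub>R H' ((1/r) *\<^sub>R Y)) (ball (r *\<^sub>R X0) (r*\<rho>))"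
  unfolding C2_on_def
proof (intro conjI ballI)
  have mem: "(1/r) *\<^sub>R y \<in> ball X0 \<rho>" if "y \<in> ball (r *\<^sub>R X0) (r*\<rho>)" for y
  proof -
    have "dist X0 ((1/r) *\<^sub>R y) = dist (r *\<^sub>R X0) y / r" using r(1) by (rule dist_rescale)
    also have "\<dots> < \<rho>" using that r by (simp add: field_simps)
    finally show ?thesis by simp
  qed
  fix y assume y: "y \<in> ball (r *\<^sub>R X0) (r*\<rho>)"
  have d1: "(\<phi>' has_derivative (\<lambda>v. g' ((1/r) *\<^sub>R y) \<bullet> v)) (at ((1/r) *\<^sub>R y))"
    and d2: "(g' has_derivative (\<lambda>v. H' ((1/r) *\<^sub>R y) *v v)) (at ((1/r) *\<^sub>R y))"
    using C2 mem[OF y] unfolding C2_on_def by auto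
  have lin: "((\<lambda>Y. (1/r) *\<^sub>R Y) has_derivative (\<lambda>v. (1/r) *\<^sub>R v)) (at y)"
    by (intro derivative_eq_intros) auto
  have c1: "((\<lambda>Y. \<phi>' ((1/r) *\<^sub>R Y)) has_derivative (\<lambda>v. g' ((1/r) *\<^sub>R y) \<bullet> ((1/r) *\<^sub>R v))) (at y)"
    using diff_chain_at[OF lin d1] by (simp add: o_def)
  have "((\<lambda>Y. a + b \<bullet> Y + s * \<phi>' ((1/r) *\<^sub>R Y)) has_derivative
          (\<lambda>v. 0 + b \<bullet> v + s * (g' ((1/r) *\<^sub>R y) \<bullet> ((1/r) *\<^sub>R v)))) (at y)"
    by (intro derivative_intros c1 bounded_linear.has_derivative[OF bounded_linear_inner_right])
  then show "((\<lambda>Y. a + b \<bullet> Y + s * \<phi>' ((1/r) *\<^sub>R Y)) has_derivative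
          (\<lambda>v. (b + (s/r) *\<^sub>R g' ((1/r) *\<^sub>R y)) \<bullet> v)) (at y)"
    by (rule has_derivative_eq_rhs) (auto simp: inner_add_left fun_eq_iff)
  have c2: "((\<lambda>Y. g' ((1/r) *\<^sub>R Y)) has_derivative (\<lambda>v. H' ((1/r) *\<^sub>R y) *v ((1/r) *\<^sub>R v))) (at y)"
    using diff_chain_at[OF lin d2] by (simp add: o_def)
  have "((\<lambda>Y. b + (s/r) *\<^sub>R g' ((1/r) *\<^sub>R Y)) has_derivative
          (\<lambda>v. 0 + (s/r) *\<^sub>R (H' ((1/r) *\<^sub>R y) *v ((1/r) *\<^sub>R v)))) (at y)"
    by (intro derivative_intros c2)
  then show "((\<lambda>Y. b + (s/r) *\<^sub>R g' ((1/r) *\<^sub>R Y)) has_derivative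
          (\<lambda>v. (s/(r*r)) *\<^sub>R H' ((1/r) *\<^sub>R y) *v v)) (at y)"
    by (rule has_derivative_eq_rhs)
       (auto simp: fun_eq_iff scaleR_matrix_vector_assoc[symmetric] matrix_vector_mult_scaleR)
next
  have mem: "(\<lambda>Y. (1/r) *\<^sub>R Y) ` ball (r *\<^sub>R X0) (r*\<rho>) \<subseteq> ball X0 \<rho>"
  proof
    fix z assume "z \<in> (\<lambda>Y. (1/r) *\<^sub>R Y) ` ball (r *\<^sub>R X0) (r*\<rho>)"
    then obtain y where y: "y \<in> ball (r *\<^sub>R X0) (r*\<rho>)" and z: "z = (1/r) *\<^sub>R y" by auto
    have "dist X0 ((1/r) *\<^sub>R y) = dist (r *\<^sub>R X0) y / r" using r(1) by (rule dist_rescale)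
    also have "\<dots> < \<rho>" using y r by (simp add: field_simps)
    finally show "z \<in> ball X0 \<rho>" using z by simp
  qed
  have "continuous_on (ball X0 \<rho>) H'" using C2 unfolding C2_on_def by auto
  then have "continuous_on (ball (r *\<^sub>R X0) (r*\<rho>)) (\<lambda>Y. H' ((1/r) *\<^sub>R Y))"
  proof (rule continuous_on_compose2[OF _ _ mem])
    show "continuous_on (ball (r *\<^sub>R X0) (r * \<rho>)) (\<lambda>Y. (1/r) *\<^sub>R Y)" by (intro continuous_intros)
  qed
  then show "continuous_on (ball (r *\<^sub>R X0) (r*\<rho>)) (\<lambda>Y. (s/(r*r)) *\<^sub>R H' ((1/r) *\<^sub>R Y))"
    by (intro continuous_intros)
qed


lemma ball_rescale_sub:
  assumes r: "0 < r" "r \<le> 1" and sub: "ball X0 \<rho> \<subseteq> ball (0::real^'n) 1"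
  shows "ball (r *\<^sub>R X0) (r*\<rho>) \<subseteq> ball 0 1"
    and "\<And>y. y \<in> ball (r *\<^sub>R X0) (r*\<rho>) \<Longrightarrow> (1/r) *\<^sub>R y \<in> ball X0 \<rho>"
proof -
  show m: "(1/r) *\<^sub>R y \<in> ball X0 \<rho>" if "y \<in> ball (r *\<^sub>R X0) (r*\<rho>)" for y
  proof -
    have "dist X0 ((1/r) *\<^sub>R y) = dist (r *\<^sub>R X0) y / r" using r(1) by (rule dist_rescale)
    also have "\<dots> < \<rho>" using that r by (simp add: divide_less_eq mult.commute)
    finally show ?thesis by simp
  qed
  show "ball (r *\<^sub>R X0) (r*\<rho>) \<subseteq> ball 0 1"
  proof
    fix y assume "y \<in> ball (r *\<^sub>R X0) (r*\<rho>)"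
    then have "(1/r) *\<^sub>R y \<in> ball 0 1" using m sub by blast
    then have "norm y / r < 1" using r by (simp add: mem_ball_0)
    then show "y \<in> ball 0 1" using r by (simp add: field_simps)
  qed
qed

lemma key_eq:
  fixes q b p :: "real^'n"
  assumes r: "0 < r" and s: "0 < s"
  shows "norm ((1/(s/r)) *\<^sub>R (q+b) + p) powr \<gamma> * ((r*r/s) * F (r *\<^sub>R X) ((s/(r*r)) *\<^sub>R M))
          - ((r*r/s) / (s/r) powr \<gamma>) * f (r *\<^sub>R X)
       = ((r*r/s) / (s/r) powr \<gamma>) * (norm (q + (b + (s/r) *\<^sub>R p)) powr \<gamma> * F (r *\<^sub>R X) ((s/(r*r)) *\<^sub>R M) - f (r *\<^sub>R X))"
proof -
  define c where "c = s/r"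
  have c: "0 < c" using r s by (simp add: c_def)
  have "q + (b + c *\<^sub>R p) = c *\<^sub>R ((1/c) *\<^sub>R (q+b) + p)" using c by (simp add: algebra_simps)
  then have eq: "norm (q + (b + c *\<^sub>R p)) powr \<gamma> = c powr \<gamma> * norm ((1/c) *\<^sub>R (q+b) + p) powr \<gamma>"
    using c by (simp add: powr_mult)
  have cp: "c powr \<gamma> > 0" using c by simp
  have gen: "A * (D * E) - D / k * B = D / k * (k * A * E - B)" if "k > 0" for A B D E k :: real
  proof -
    have "D / k * (k * A * E) = A * (D * E)" using that by simp
    then show ?thesis by (simp add: right_diff_distrib)
  qed
  show ?thesis unfolding c_def[symmetric] eq by (rule gen[OF cp])

qed


lemma rescale:
  fixes q b :: "real^'n"
  assumes H: "hyp_class lam Lam \<gamma> \<epsilon>0 q F f u"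
    and r: "0 < r" "r \<le> 1" and s: "0 < s"
    and kap: "(r*r/s) / (s/r) powr \<gamma> \<le> 1"
    and appr: "\<forall>Y\<in>ball 0 r. \<bar>u Y - (a + b \<bullet> Y)\<bar> \<le> s"
  shows "hyp_class lam Lam \<gamma> \<epsilon>0 ((1/(s/r)) *\<^sub>R (q+b))
     (\<lambda>X M. (r*r/s) * F (r *\<^sub>R X) ((s/(r*r)) *\<^sub>R M))
     (\<lambda>X. ((r*r/s) / (s/r) powr \<gamma>) * f (r *\<^sub>R X))
     (\<lambda>X. (u (r *\<^sub>R X) - (a + b \<bullet> (r *\<^sub>R X))) / s)"
proof -
  define t where "t = r*r/s"
  define \<kappa> where "\<kappa> = t / (s/r) powr \<gamma>"
  have t: "0 < t" using r s by (simp add: t_def)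
  have ti: "s/(r*r) = 1/t" by (simp add: t_def)
  have k0: "0 \<le> \<kappa>" using r s by (simp add: \<kappa>_def t_def)
  have k1: "\<kappa> \<le> 1" using kap by (simp add: \<kappa>_def t_def)
  have inb: "r *\<^sub>R X \<in> ball 0 1" if "X \<in> ball (0::real^'n) 1" for X
  proof -
    have "norm X < 1" using that by (simp add: mem_ball_0)
    then have "r * norm X < 1" using r by (smt (verit) mult_left_le_one_le norm_ge_zero)
    then show ?thesis using r by (simp add: mem_ball_0)
  qed
  from H have ell: "unif_elliptic lam Lam F (ball 0 1)" and F0: "\<forall>X\<in>ball 0 1. F X 0 = 0"
    and cu: "continuous_on (ball 0 1) u" and ub: "\<forall>X\<in>ball 0 1. \<bar>u X\<bar> \<le> 1"
    and vs: "visc_solution (\<lambda>X p M. norm (q + p) powr \<gamma> * F X M - f X) u (ball 0 1)"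
    unfolding hyp_class_def by auto
  from H obtain \<theta> \<eta> where th: "\<forall>M X. sym_mat M \<and> M \<noteq> 0 \<and> X \<in> ball 0 1 \<longrightarrow> \<bar>F X M - F 0 M\<bar> \<le> \<theta> * mnorm M"
    and et: "\<forall>X\<in>ball 0 1. \<bar>f X\<bar> \<le> \<eta>" and te: "\<theta> + \<eta> \<le> \<epsilon>0"
    unfolding hyp_class_def by blast
  show ?thesis
    unfolding hyp_class_def ti t_def[symmetric] unfolding \<kappa>_def[symmetric]
  proof (intro conjI)
    have ELL: "\<forall>X\<in>ball 0 1. \<forall>M P. sym_mat M \<and> sym_mat P \<and> psd_mat P \<longrightarrow> lam * mnorm P \<le> t * F (r *\<^sub>R X) ((1/t) *\<^sub>R (M + P)) - t * F (r *\<^sub>R X) ((1/t) *\<^sub>R M) \<and>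
           t * F (r *\<^sub>R X) ((1/t) *\<^sub>R (M + P)) - t * F (r *\<^sub>R X) ((1/t) *\<^sub>R M) \<le> Lam * mnorm P"
    proof (intro ballI allI impI)
      fix X and M P :: "real^'n^'n" assume X: "X \<in> ball (0::real^'n) 1" and MP: "sym_mat M \<and> sym_mat P \<and> psd_mat P"
      have "lam * mnorm ((1/t) *\<^sub>R P) \<le> F (r *\<^sub>R X) ((1/t) *\<^sub>R M + (1/t) *\<^sub>R P) - F (r *\<^sub>R X) ((1/t) *\<^sub>R M)
          \<and> F (r *\<^sub>R X) ((1/t) *\<^sub>R M + (1/t) *\<^sub>R P) - F (r *\<^sub>R X) ((1/t) *\<^sub>R M) \<le> Lam * mnorm ((1/t) *\<^sub>R P)"
      proof -
        have sM: "sym_mat ((1/t) *\<^sub>R M)" using MP by (simp add: sym_scale)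
        have sP: "sym_mat ((1/t) *\<^sub>R P)" using MP by (simp add: sym_scale)
        have pP: "psd_mat ((1/t) *\<^sub>R P)" using MP t by (simp add: psd_scale)
        show ?thesis using ell inb[OF X] sM sP pP unfolding unif_elliptic_def by blast
      qed
      then have "t * (lam * mnorm ((1/t) *\<^sub>R P)) \<le> t * (F (r *\<^sub>R X) ((1/t) *\<^sub>R (M + P)) - F (r *\<^sub>R X) ((1/t) *\<^sub>R M))
          \<and> t * (F (r *\<^sub>R X) ((1/t) *\<^sub>R (M + P)) - F (r *\<^sub>R X) ((1/t) *\<^sub>R M)) \<le> t * (Lam * mnorm ((1/t) *\<^sub>R P))"
        using t by (simp add: scaleR_add_right)
      then show "lam * mnorm P \<le> t * F (r *\<^sub>R X) ((1/t) *\<^sub>R (M + P)) - t * F (r *\<^sub>R X) ((1/t) *\<^sub>R M) \<and>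
           t * F (r *\<^sub>R X) ((1/t) *\<^sub>R (M + P)) - t * F (r *\<^sub>R X) ((1/t) *\<^sub>R M) \<le> Lam * mnorm P"
        using t by (simp add: mnorm_scale right_diff_distrib)
    qed
    then show "unif_elliptic lam Lam (\<lambda>X M. t * F (r *\<^sub>R X) ((1/t) *\<^sub>R M)) (ball 0 1)"
      unfolding unif_elliptic_def by blast
    show "\<forall>X\<in>ball 0 1. t * F (r *\<^sub>R X) ((1/t) *\<^sub>R 0) = 0" using F0 inb by simp
    show "\<exists>\<theta> \<eta>. (\<forall>M X. sym_mat M \<and> M \<noteq> 0 \<and> X \<in> ball 0 1 \<longrightarrow>
             \<bar>t * F (r *\<^sub>R X) ((1/t) *\<^sub>R M) - t * F (r *\<^sub>R 0) ((1/t) *\<^sub>R M)\<bar> \<le> \<theta> * mnorm M) \<and>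
          (\<forall>X\<in>ball 0 1. \<bar>\<kappa> * f (r *\<^sub>R X)\<bar> \<le> \<eta>) \<and> \<theta> + \<eta> \<le> \<epsilon>0"
    proof (intro exI conjI allI impI ballI)
      fix M :: "real^'n^'n" and X assume a: "sym_mat M \<and> M \<noteq> 0 \<and> X \<in> ball (0::real^'n) 1"
      have "\<bar>F (r *\<^sub>R X) ((1/t) *\<^sub>R M) - F 0 ((1/t) *\<^sub>R M)\<bar> \<le> \<theta> * mnorm ((1/t) *\<^sub>R M)"
      proof -
        have "sym_mat ((1/t) *\<^sub>R M) \<and> (1/t) *\<^sub>R M \<noteq> 0 \<and> r *\<^sub>R X \<in> ball 0 1"
          using a inb t by (simp add: sym_scale)
        then show ?thesis using th by blast
      qed
      then have "t * \<bar>F (r *\<^sub>R X) ((1/t) *\<^sub>R M) - F 0 ((1/t) *\<^sub>R M)\<bar> \<le> t * (\<theta> * mnorm ((1/t) *\<^sub>R M))"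
        using t by simp
      then show "\<bar>t * F (r *\<^sub>R X) ((1/t) *\<^sub>R M) - t * F (r *\<^sub>R 0) ((1/t) *\<^sub>R M)\<bar> \<le> \<theta> * mnorm M"
        using t by (simp add: mnorm_scale abs_mult right_diff_distrib[symmetric])
    next
      fix X assume X: "X \<in> ball (0::real^'n) 1"
      have "\<bar>\<kappa> * f (r *\<^sub>R X)\<bar> = \<kappa> * \<bar>f (r *\<^sub>R X)\<bar>" using k0 by (simp add: abs_mult)
      also have "\<dots> \<le> 1 * \<eta>" using et inb[OF X] k0 k1
        by (intro mult_mono) auto
      finally show "\<bar>\<kappa> * f (r *\<^sub>R X)\<bar> \<le> \<eta>" by simp
    next
      show "\<theta> + \<eta> \<le> \<epsilon>0" by (rule te)
    qed
    show "continuous_on (ball 0 1) (\<lambda>X. (u (r *\<^sub>R X) - (a + b \<bullet> (r *\<^sub>R X))) / s)"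
    proof -
      have "continuous_on (ball 0 1) (\<lambda>X. u (r *\<^sub>R X))"
      proof (rule continuous_on_compose2[OF cu])
        show "continuous_on (ball (0::real^'n) 1) (\<lambda>X. r *\<^sub>R X)" by (intro continuous_intros)
        show "(\<lambda>X. r *\<^sub>R X) ` ball (0::real^'n) 1 \<subseteq> ball 0 1" using inb by blast
      qed
      then show ?thesis using s by (intro continuous_intros) auto
    qed
    show "\<forall>X\<in>ball 0 1. \<bar>(u (r *\<^sub>R X) - (a + b \<bullet> (r *\<^sub>R X))) / s\<bar> \<le> 1"
    proof
      fix X assume X: "X \<in> ball (0::real^'n) 1"
      have "r *\<^sub>R X \<in> ball 0 r" using X r by (simp add: mem_ball_0)
      then have "\<bar>u (r *\<^sub>R X) - (a + b \<bullet> (r *\<^sub>R X))\<bar> \<le> s" using appr by blast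
      then show "\<bar>(u (r *\<^sub>R X) - (a + b \<bullet> (r *\<^sub>R X))) / s\<bar> \<le> 1" using s by simp
    qed
    show "visc_solution (\<lambda>X p M. norm ((1/(s/r)) *\<^sub>R (q+b) + p) powr \<gamma> * (t * F (r *\<^sub>R X) ((1/t) *\<^sub>R M)) - \<kappa> * f (r *\<^sub>R X))
          (\<lambda>X. (u (r *\<^sub>R X) - (a + b \<bullet> (r *\<^sub>R X))) / s) (ball 0 1)"
    proof -
      define v where "v = (\<lambda>X. (u (r *\<^sub>R X) - (a + b \<bullet> (r *\<^sub>R X))) / s)"
      have KE: "norm ((1/(s/r)) *\<^sub>R (q+b) + p) powr \<gamma> * (t * F (r *\<^sub>R X) ((1/t) *\<^sub>R M)) - \<kappa> * f (r *\<^sub>R X)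
         = \<kappa> * (norm (q + (b + (s/r) *\<^sub>R p)) powr \<gamma> * F (r *\<^sub>R X) ((1/t) *\<^sub>R M) - f (r *\<^sub>R X))" for p X M
        using key_eq[OF r(1) s, of q b p \<gamma> F X M f] unfolding ti t_def[symmetric] \<kappa>_def[symmetric] .
      have rr: "(1/r) *\<^sub>R (r *\<^sub>R X0) = X0" for X0 :: "real^'n" using r by simp
      have vs1: "visc_sub (\<lambda>X p M. norm (q + p) powr \<gamma> * F X M - f X) u (ball 0 1)"
        and vs2: "visc_super (\<lambda>X p M. norm (q + p) powr \<gamma> * F X M - f X) u (ball 0 1)"
        using vs unfolding visc_solution_def by auto
      have trans: "u y - (a + b \<bullet> y + s * \<phi>' ((1/r) *\<^sub>R y)) = s * (v ((1/r) *\<^sub>R y) - \<phi>' ((1/r) *\<^sub>R y))"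
        for y and \<phi>' :: "real^'n \<Rightarrow> real"
        using r s by (simp add: v_def field_simps)
      have "visc_sub (\<lambda>X p M. norm ((1/(s/r)) *\<^sub>R (q+b) + p) powr \<gamma> * (t * F (r *\<^sub>R X) ((1/t) *\<^sub>R M)) - \<kappa> * f (r *\<^sub>R X)) v (ball 0 1)"
        unfolding visc_sub_def
      proof (intro ballI allI impI)
        fix X0 \<phi>' g' H' \<rho>
        assume X0: "X0 \<in> ball (0::real^'n) 1"
          and A: "0 < \<rho> \<and> ball X0 \<rho> \<subseteq> ball 0 1 \<and> C2_on \<phi>' g' H' (ball X0 \<rho>) \<and> (\<forall>y\<in>ball X0 \<rho>. v y - \<phi>' y \<le> v X0 - \<phi>' X0)"
        have C2: "C2_on (\<lambda>Y. a + b \<bullet> Y + s * \<phi>' ((1/r) *\<^sub>R Y))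
               (\<lambda>Y. b + (s/r) *\<^sub>R g' ((1/r) *\<^sub>R Y))
               (\<lambda>Y. (s/(r*r)) *\<^sub>R H' ((1/r) *\<^sub>R Y)) (ball (r *\<^sub>R X0) (r*\<rho>))"
          using C2_rescale A r(1) s by blast
        have sub: "ball (r *\<^sub>R X0) (r*\<rho>) \<subseteq> ball 0 1" using ball_rescale_sub(1)[OF r] A by blast
        have mx: "\<forall>y\<in>ball (r *\<^sub>R X0) (r*\<rho>). u y - (a + b \<bullet> y + s * \<phi>' ((1/r) *\<^sub>R y))
                 \<le> u (r *\<^sub>R X0) - (a + b \<bullet> (r *\<^sub>R X0) + s * \<phi>' ((1/r) *\<^sub>R (r *\<^sub>R X0)))"
        proof
          fix y assume y: "y \<in> ball (r *\<^sub>R X0) (r*\<rho>)"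
          have "(1/r) *\<^sub>R y \<in> ball X0 \<rho>" using ball_rescale_sub(2)[OF r] A y by blast
          then have "v ((1/r) *\<^sub>R y) - \<phi>' ((1/r) *\<^sub>R y) \<le> v X0 - \<phi>' X0" using A by blast
          then show "u y - (a + b \<bullet> y + s * \<phi>' ((1/r) *\<^sub>R y))
                 \<le> u (r *\<^sub>R X0) - (a + b \<bullet> (r *\<^sub>R X0) + s * \<phi>' ((1/r) *\<^sub>R (r *\<^sub>R X0)))"
          proof -
            have R: "u (r *\<^sub>R X0) - (a + b \<bullet> (r *\<^sub>R X0) + s * \<phi>' ((1/r) *\<^sub>R (r *\<^sub>R X0))) = s * (v X0 - \<phi>' X0)"
              using trans[of "r *\<^sub>R X0" \<phi>'] unfolding rr .
            show ?thesis unfolding trans[of y \<phi>'] R using s \<open>v ((1/r) *\<^sub>R y) - \<phi>' ((1/r) *\<^sub>R y) \<le> v X0 - \<phi>' X0\<close>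
              by (intro mult_left_mono) auto
          qed
        qed
        have rp: "0 < r * \<rho>" using r A by simp
        have "0 \<le> norm (q + (b + (s/r) *\<^sub>R g' ((1/r) *\<^sub>R (r *\<^sub>R X0)))) powr \<gamma>
                 * F (r *\<^sub>R X0) ((s/(r*r)) *\<^sub>R H' ((1/r) *\<^sub>R (r *\<^sub>R X0))) - f (r *\<^sub>R X0)"
          using vs1 inb[OF X0] rp sub C2 mx unfolding visc_sub_def by blast
        then have "0 \<le> \<kappa> * (norm (q + (b + (s/r) *\<^sub>R g' X0)) powr \<gamma> * F (r *\<^sub>R X0) ((1/t) *\<^sub>R H' X0) - f (r *\<^sub>R X0))"
          using k0 unfolding rr ti by simp
        then show "0 \<le> norm ((1/(s/r)) *\<^sub>R (q+b) + g' X0) powr \<gamma> * (t * F (r *\<^sub>R X0) ((1/t) *\<^sub>R H' X0)) - \<kappa> * f (r *\<^sub>R X0)"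
          unfolding KE .
      qed
      moreover have "visc_super (\<lambda>X p M. norm ((1/(s/r)) *\<^sub>R (q+b) + p) powr \<gamma> * (t * F (r *\<^sub>R X) ((1/t) *\<^sub>R M)) - \<kappa> * f (r *\<^sub>R X)) v (ball 0 1)"
        unfolding visc_super_def
      proof (intro ballI allI impI)
        fix X0 \<phi>' g' H' \<rho>
        assume X0: "X0 \<in> ball (0::real^'n) 1"
          and A: "0 < \<rho> \<and> ball X0 \<rho> \<subseteq> ball 0 1 \<and> C2_on \<phi>' g' H' (ball X0 \<rho>) \<and> (\<forall>y\<in>ball X0 \<rho>. v y - \<phi>' y \<ge> v X0 - \<phi>' X0)"
        have C2: "C2_on (\<lambda>Y. a + b \<bullet> Y + s * \<phi>' ((1/r) *\<^sub>R Y))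
               (\<lambda>Y. b + (s/r) *\<^sub>R g' ((1/r) *\<^sub>R Y))
               (\<lambda>Y. (s/(r*r)) *\<^sub>R H' ((1/r) *\<^sub>R Y)) (ball (r *\<^sub>R X0) (r*\<rho>))"
          using C2_rescale A r(1) s by blast
        have sub: "ball (r *\<^sub>R X0) (r*\<rho>) \<subseteq> ball 0 1" using ball_rescale_sub(1)[OF r] A by blast
        have mx: "\<forall>y\<in>ball (r *\<^sub>R X0) (r*\<rho>). u y - (a + b \<bullet> y + s * \<phi>' ((1/r) *\<^sub>R y))
                 \<ge> u (r *\<^sub>R X0) - (a + b \<bullet> (r *\<^sub>R X0) + s * \<phi>' ((1/r) *\<^sub>R (r *\<^sub>R X0)))"
        proof
          fix y assume y: "y \<in> ball (r *\<^sub>R X0) (r*\<rho>)"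
          have "(1/r) *\<^sub>R y \<in> ball X0 \<rho>" using ball_rescale_sub(2)[OF r] A y by blast
          then have "v ((1/r) *\<^sub>R y) - \<phi>' ((1/r) *\<^sub>R y) \<ge> v X0 - \<phi>' X0" using A by blast
          then show "u y - (a + b \<bullet> y + s * \<phi>' ((1/r) *\<^sub>R y))
                 \<ge> u (r *\<^sub>R X0) - (a + b \<bullet> (r *\<^sub>R X0) + s * \<phi>' ((1/r) *\<^sub>R (r *\<^sub>R X0)))"
          proof -
            have R: "u (r *\<^sub>R X0) - (a + b \<bullet> (r *\<^sub>R X0) + s * \<phi>' ((1/r) *\<^sub>R (r *\<^sub>R X0))) = s * (v X0 - \<phi>' X0)"
              using trans[of "r *\<^sub>R X0" \<phi>'] unfolding rr .
            show ?thesis unfolding trans[of y \<phi>'] R using s \<open>v ((1/r) *\<^sub>R y) - \<phi>' ((1/r) *\<^sub>R y) \<ge> v X0 - \<phi>' X0\<close>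
              by (intro mult_left_mono) auto
          qed
        qed
        have rp: "0 < r * \<rho>" using r A by simp
        have "norm (q + (b + (s/r) *\<^sub>R g' ((1/r) *\<^sub>R (r *\<^sub>R X0)))) powr \<gamma>
                 * F (r *\<^sub>R X0) ((s/(r*r)) *\<^sub>R H' ((1/r) *\<^sub>R (r *\<^sub>R X0))) - f (r *\<^sub>R X0) \<le> 0"
          using vs2 inb[OF X0] rp sub C2 mx unfolding visc_super_def by blast
        then have "\<kappa> * (norm (q + (b + (s/r) *\<^sub>R g' X0)) powr \<gamma> * F (r *\<^sub>R X0) ((1/t) *\<^sub>R H' X0) - f (r *\<^sub>R X0)) \<le> 0"
          using k0 unfolding rr ti by (simp add: mult_nonneg_nonpos)
        then show "norm ((1/(s/r)) *\<^sub>R (q+b) + g' X0) powr \<gamma> * (t * F (r *\<^sub>R X0) ((1/t) *\<^sub>R H' X0)) - \<kappa> * f (r *\<^sub>R X0) \<le> 0"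
          unfolding KE .
      qed
      ultimately show ?thesis unfolding visc_solution_def v_def by blast
    qed
  qed
qed



lemma kappa_le:
  fixes \<rho> \<alpha> \<gamma> :: real
  assumes r: "0 < \<rho>" "\<rho> < 1" and a: "0 < \<alpha>" "\<alpha> \<le> 1/(1+\<gamma>)" and g: "0 < \<gamma>"
  shows "(\<rho>*\<rho>/(\<rho> powr (1+\<alpha>))) / ((\<rho> powr (1+\<alpha>))/\<rho>) powr \<gamma> \<le> 1"
proof -
  have e1: "\<rho>*\<rho>/(\<rho> powr (1+\<alpha>)) = \<rho> powr (1-\<alpha>)"
  proof -
    have "\<rho> powr (1+\<alpha>) = \<rho> * \<rho> powr \<alpha>" using r powr_add[of \<rho> 1 \<alpha>] by simp
    moreover have "\<rho> powr (1-\<alpha>) = \<rho> / \<rho> powr \<alpha>" using r by (simp add: powr_diff)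
    ultimately show ?thesis using r by (simp add: field_simps)
  qed
  have e2: "(\<rho> powr (1+\<alpha>))/\<rho> = \<rho> powr \<alpha>"
    using r powr_add[of \<rho> 1 \<alpha>] by simp
  have e3: "\<rho> powr (1-\<alpha>) / (\<rho> powr \<alpha>) powr \<gamma> = \<rho> powr (1 - \<alpha> - \<alpha>*\<gamma>)"
    using r by (simp add: powr_powr powr_diff)
  have "\<alpha> * (1+\<gamma>) \<le> 1" using a g by (simp add: field_simps)
  then have "0 \<le> 1 - \<alpha> - \<alpha>*\<gamma>" by (simp add: algebra_simps)
  then have "\<rho> powr (1 - \<alpha> - \<alpha>*\<gamma>) \<le> 1" using r by (intro powr_le1) auto
  then show ?thesis unfolding e1 e2 e3 .
qed


type_synonym 'n st = "(real^'n) \<times> (real^'n \<Rightarrow> real^'n^'n \<Rightarrow> real) \<times> (real^'n \<Rightarrow> real) \<times> (real^'n \<Rightarrow> real) \<times> real \<times> (real^'n)"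

definition choice_ab :: "real \<Rightarrow> real \<Rightarrow> real \<Rightarrow> (real^('n::finite) \<Rightarrow> real) \<Rightarrow> real \<times> (real^'n)" where
  "choice_ab C \<rho> S u = (SOME p. \<bar>fst p\<bar> + norm (snd p) \<le> C \<and> (\<forall>X\<in>ball 0 \<rho>. \<bar>u X - (fst p + snd p \<bullet> X)\<bar> \<le> S))"

definition nxt :: "real \<Rightarrow> real \<Rightarrow> real \<Rightarrow> real \<Rightarrow> nat \<Rightarrow> ('n::finite) st \<Rightarrow> 'n st" where
  "nxt C \<rho> S \<gamma> k z = (let q = fst z; F = fst (snd z); f = fst (snd (snd z)); u = fst (snd (snd (snd z)));
     A = fst (snd (snd (snd (snd z)))); B = snd (snd (snd (snd (snd z))));
     a' = fst (choice_ab C \<rho> S u); b' = snd (choice_ab C \<rho> S u) in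
       ((1/(S/\<rho>)) *\<^sub>R (q+b'), (\<lambda>X M. (\<rho>*\<rho>/S) * F (\<rho> *\<^sub>R X) ((S/(\<rho>*\<rho>)) *\<^sub>R M)),
        (\<lambda>X. ((\<rho>*\<rho>/S) / (S/\<rho>) powr \<gamma>) * f (\<rho> *\<^sub>R X)),
        (\<lambda>X. (u (\<rho> *\<^sub>R X) - (a' + b' \<bullet> (\<rho> *\<^sub>R X))) / S),
        A + S^k * a', B + (S^k/\<rho>^k) *\<^sub>R b'))"

lemma algebra_step:
  fixes B b' X :: "real^'n"
  assumes r: "0 < \<rho>" and S: "0 < S"
  shows "((U - (A + B \<bullet> (\<rho>^Suc k *\<^sub>R X))) / S^k - (a' + b' \<bullet> (\<rho> *\<^sub>R X))) / S
       = (U - ((A + S^k * a') + (B + (S^k/\<rho>^k) *\<^sub>R b') \<bullet> (\<rho>^Suc k *\<^sub>R X))) / S^Suc k"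
proof -
  have p1: "\<rho>^k > 0" "S^k > 0" using r S by auto
  show ?thesis using p1 r S
    by (simp add: inner_add_left field_simps)
qed

theorem lemma6p2:
  fixes lam Lam C :: real
  assumes "0 < lam" and "lam \<le> Lam"
  shows "\<exists>C0 > 0. \<forall>\<gamma> \<alpha> \<rho>0 \<epsilon>0.
     0 < \<gamma> \<and> 0 < \<alpha> \<and> \<alpha> < alpha0 TYPE('n::finite) lam Lam \<and> \<alpha> \<le> 1 / (1 + \<gamma>) \<and>
     0 < \<rho>0 \<and> \<rho>0 < 1/2 \<and> 0 < \<epsilon>0 \<and>
     step_property TYPE('n) lam Lam \<gamma> \<alpha> \<rho>0 \<epsilon>0 C \<longrightarrow>
     (\<forall>(q::real^'n) F f u. hyp_class lam Lam \<gamma> \<epsilon>0 q F f u \<longrightarrow>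
        (\<exists>(a::nat \<Rightarrow> real) (b::nat \<Rightarrow> real^'n). \<forall>k\<ge>1.
           \<bar>a (Suc k) - a k\<bar> + \<rho>0 ^ k * norm (b (Suc k) - b k) \<le> C0 * \<rho>0 powr ((1 + \<alpha>) * k) \<and>
           (\<forall>X\<in>ball 0 (\<rho>0 ^ k). \<bar>u X - (a k + b k \<bullet> X)\<bar> \<le> \<rho>0 powr (k * (1 + \<alpha>)))))"
proof (intro exI[of _ "\<bar>C\<bar> + 1"] conjI allI impI)
  show "0 < \<bar>C\<bar> + 1" by simp
  fix \<gamma> \<alpha> \<rho> \<epsilon>0 :: real and q0 :: "real^'n" and F0 f0 u0
  assume cond: "0 < \<gamma> \<and> 0 < \<alpha> \<and> \<alpha> < alpha0 TYPE('n::finite) lam Lam \<and> \<alpha> \<le> 1 / (1 + \<gamma>) \<and>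
     0 < \<rho> \<and> \<rho> < 1/2 \<and> 0 < \<epsilon>0 \<and> step_property TYPE('n) lam Lam \<gamma> \<alpha> \<rho> \<epsilon>0 C"
    and H0: "hyp_class lam Lam \<gamma> \<epsilon>0 q0 F0 f0 u0"
  have g: "0 < \<gamma>" and al: "0 < \<alpha>" "\<alpha> \<le> 1/(1+\<gamma>)" and r: "0 < \<rho>" "\<rho> < 1"
    and sp: "step_property TYPE('n) lam Lam \<gamma> \<alpha> \<rho> \<epsilon>0 C" using cond by auto
  define S where "S = \<rho> powr (1+\<alpha>)"
  have S: "0 < S" using r by (simp add: S_def)
  have kap: "(\<rho>*\<rho>/S) / (S/\<rho>) powr \<gamma> \<le> 1" unfolding S_def using kappa_le[OF r al g] .
  have Sk: "S^k = \<rho> powr ((1+\<alpha>) * k)" for k :: nat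
    using r by (simp add: S_def powr_powr[symmetric] powr_realpow)
  define st :: "nat \<Rightarrow> 'n st" where "st = rec_nat (q0,F0,f0,u0,0,0) (nxt C \<rho> S \<gamma>)"
  have st0: "st 0 = (q0,F0,f0,u0,0,0)" and stS: "st (Suc k) = nxt C \<rho> S \<gamma> k (st k)" for k
    by (simp_all add: st_def)
  have choice: "\<bar>fst (choice_ab C \<rho> S v)\<bar> + norm (snd (choice_ab C \<rho> S v)) \<le> C \<and>
      (\<forall>X\<in>ball 0 \<rho>. \<bar>v X - (fst (choice_ab C \<rho> S v) + snd (choice_ab C \<rho> S v) \<bullet> X)\<bar> \<le> S)"
    if hv: "hyp_class lam Lam \<gamma> \<epsilon>0 q' F' f' v" for q' :: "real^'n" and F' f' v
  proof -
    have "\<exists>p. \<bar>fst p\<bar> + norm (snd p) \<le> C \<and> (\<forall>X\<in>ball 0 \<rho>. \<bar>v X - (fst p + snd p \<bullet> X)\<bar> \<le> S)"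
    proof -
      obtain a0 b0 where "\<bar>a0\<bar> + norm b0 \<le> C \<and> (\<forall>X\<in>ball 0 \<rho>. \<bar>v X - (a0 + b0 \<bullet> X)\<bar> \<le> \<rho> powr (1 + \<alpha>))"
        using sp[unfolded step_property_def, rule_format, OF hv] by blast
      then show ?thesis unfolding S_def by (intro exI[of _ "(a0,b0)"]) simp
    qed
    then show ?thesis unfolding choice_ab_def by (rule someI_ex)
  qed
  define P where "P k \<longleftrightarrow> (case st k of (q',F',f',v,A,B) \<Rightarrow> hyp_class lam Lam \<gamma> \<epsilon>0 q' F' f' v \<and>
        (\<forall>X\<in>ball 0 1. v X = (u0 (\<rho>^k *\<^sub>R X) - (A + B \<bullet> (\<rho>^k *\<^sub>R X))) / S^k))" for k
  have inv: "P k" for k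
  proof (induction k)
    case 0 then show ?case unfolding P_def st0 using H0 by simp
  next
    case (Suc k)
    obtain q' F' f' v A B where sk: "st k = (q',F',f',v,A,B)" by (cases "st k") auto
    obtain a' b' where ab: "choice_ab C \<rho> S v = (a',b')" by (cases "choice_ab C \<rho> S v") auto
    from Suc have hk: "hyp_class lam Lam \<gamma> \<epsilon>0 q' F' f' v"
      and vk: "\<forall>X\<in>ball 0 1. v X = (u0 (\<rho>^k *\<^sub>R X) - (A + B \<bullet> (\<rho>^k *\<^sub>R X))) / S^k"
      unfolding P_def sk by auto
    have ch: "\<forall>X\<in>ball 0 \<rho>. \<bar>v X - (a' + b' \<bullet> X)\<bar> \<le> S" using choice[OF hk] ab by simp
    have ssk: "st (Suc k) = ((1/(S/\<rho>)) *\<^sub>R (q'+b'), (\<lambda>X M. (\<rho>*\<rho>/S) * F' (\<rho> *\<^sub>R X) ((S/(\<rho>*\<rho>)) *\<^sub>R M)),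
        (\<lambda>X. ((\<rho>*\<rho>/S) / (S/\<rho>) powr \<gamma>) * f' (\<rho> *\<^sub>R X)),
        (\<lambda>X. (v (\<rho> *\<^sub>R X) - (a' + b' \<bullet> (\<rho> *\<^sub>R X))) / S),
        A + S^k * a', B + (S^k/\<rho>^k) *\<^sub>R b')"
      unfolding stS sk nxt_def Let_def using ab by simp
    have h1: "hyp_class lam Lam \<gamma> \<epsilon>0 ((1/(S/\<rho>)) *\<^sub>R (q'+b')) (\<lambda>X M. (\<rho>*\<rho>/S) * F' (\<rho> *\<^sub>R X) ((S/(\<rho>*\<rho>)) *\<^sub>R M))
        (\<lambda>X. ((\<rho>*\<rho>/S) / (S/\<rho>) powr \<gamma>) * f' (\<rho> *\<^sub>R X)) (\<lambda>X. (v (\<rho> *\<^sub>R X) - (a' + b' \<bullet> (\<rho> *\<^sub>R X))) / S)"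
      by (rule rescale[OF hk r(1) _ S kap ch]) (use r in simp)
    have h2: "\<forall>X\<in>ball 0 1. (v (\<rho> *\<^sub>R X) - (a' + b' \<bullet> (\<rho> *\<^sub>R X))) / S
        = (u0 (\<rho>^Suc k *\<^sub>R X) - ((A + S^k * a') + (B + (S^k/\<rho>^k) *\<^sub>R b') \<bullet> (\<rho>^Suc k *\<^sub>R X))) / S^Suc k"
    proof
      fix X :: "real^'n" assume X: "X \<in> ball 0 1"
      have "\<rho> *\<^sub>R X \<in> ball 0 1" using X r
        by (simp add: mem_ball_0) (smt (verit) mult_left_le_one_le norm_ge_zero)
      then have "v (\<rho> *\<^sub>R X) = (u0 (\<rho>^k *\<^sub>R (\<rho> *\<^sub>R X)) - (A + B \<bullet> (\<rho>^k *\<^sub>R (\<rho> *\<^sub>R X)))) / S^k"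
        using vk by blast
      moreover have e: "\<rho>^k *\<^sub>R (\<rho> *\<^sub>R X) = \<rho>^Suc k *\<^sub>R X" by (simp add: mult.commute)
      ultimately have v': "v (\<rho> *\<^sub>R X) = (u0 (\<rho>^Suc k *\<^sub>R X) - (A + B \<bullet> (\<rho>^Suc k *\<^sub>R X))) / S^k"
        by (simp only: e)
      show "(v (\<rho> *\<^sub>R X) - (a' + b' \<bullet> (\<rho> *\<^sub>R X))) / S
        = (u0 (\<rho>^Suc k *\<^sub>R X) - ((A + S^k * a') + (B + (S^k/\<rho>^k) *\<^sub>R b') \<bullet> (\<rho>^Suc k *\<^sub>R X))) / S^Suc k"
        unfolding v' by (rule algebra_step[OF r(1) S])
    qed
    show ?case unfolding P_def ssk using h1 h2 by simp
  qed
  define a where "a k = fst (snd (snd (snd (snd (st k)))))" for k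
  define b where "b k = snd (snd (snd (snd (snd (st k)))))" for k
  show "\<exists>(a::nat \<Rightarrow> real) (b::nat \<Rightarrow> real^'n). \<forall>k\<ge>1.
           \<bar>a (Suc k) - a k\<bar> + \<rho> ^ k * norm (b (Suc k) - b k) \<le> (\<bar>C\<bar> + 1) * \<rho> powr ((1 + \<alpha>) * k) \<and>
           (\<forall>X\<in>ball 0 (\<rho> ^ k). \<bar>u0 X - (a k + b k \<bullet> X)\<bar> \<le> \<rho> powr (k * (1 + \<alpha>)))"
  proof (intro exI[of _ a] exI[of _ b] allI impI conjI)
    fix k :: nat
    obtain q' F' f' v A B where sk: "st k = (q',F',f',v,A,B)" by (cases "st k") auto
    obtain a' b' where ab: "choice_ab C \<rho> S v = (a',b')" by (cases "choice_ab C \<rho> S v") auto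
    from inv[of k] have hk: "hyp_class lam Lam \<gamma> \<epsilon>0 q' F' f' v"
      and vk: "\<forall>X\<in>ball 0 1. v X = (u0 (\<rho>^k *\<^sub>R X) - (A + B \<bullet> (\<rho>^k *\<^sub>R X))) / S^k"
      unfolding P_def sk by auto
    have cb: "\<bar>a'\<bar> + norm b' \<le> C" using choice[OF hk] ab by simp
    have ak: "a k = A" "b k = B" unfolding a_def b_def sk by simp_all
    have ak1: "a (Suc k) = A + S^k * a'" "b (Suc k) = B + (S^k/\<rho>^k) *\<^sub>R b'"
      unfolding a_def b_def stS sk nxt_def Let_def using ab by simp_all
    have pk: "\<rho>^k > 0" "S^k > 0" using r S by auto
    have "\<bar>a (Suc k) - a k\<bar> + \<rho> ^ k * norm (b (Suc k) - b k) = S^k * (\<bar>a'\<bar> + norm b')"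
      unfolding ak ak1 using pk r S by (simp add: abs_mult field_simps)
    also have "\<dots> \<le> S^k * (\<bar>C\<bar> + 1)" using pk cb by (intro mult_left_mono) auto
    finally show "\<bar>a (Suc k) - a k\<bar> + \<rho> ^ k * norm (b (Suc k) - b k) \<le> (\<bar>C\<bar> + 1) * \<rho> powr ((1 + \<alpha>) * k)"
      unfolding Sk by (simp add: mult.commute)
    show "\<forall>X\<in>ball 0 (\<rho> ^ k). \<bar>u0 X - (a k + b k \<bullet> X)\<bar> \<le> \<rho> powr (k * (1 + \<alpha>))"
    proof
      fix Y :: "real^'n" assume Y: "Y \<in> ball 0 (\<rho>^k)"
      have X: "(1/\<rho>^k) *\<^sub>R Y \<in> ball 0 1" using Y pk by (simp add: mem_ball_0 field_simps)
      have e: "\<rho>^k *\<^sub>R ((1/\<rho>^k) *\<^sub>R Y) = Y" using pk r by simp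
      have "\<bar>v ((1/\<rho>^k) *\<^sub>R Y)\<bar> \<le> 1" using hk X unfolding hyp_class_def by blast
      then have "\<bar>(u0 Y - (A + B \<bullet> Y)) / S^k\<bar> \<le> 1" using vk X e by metis
      then have "\<bar>u0 Y - (A + B \<bullet> Y)\<bar> \<le> S^k" using pk by (simp add: abs_div divide_le_eq)
      then show "\<bar>u0 Y - (a k + b k \<bullet> Y)\<bar> \<le> \<rho> powr (k * (1 + \<alpha>))"
        unfolding ak Sk by (simp add: mult.commute)
    qed
  qed
qed

end
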